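(* Let $n\in\mathbb{N}_0$, $P_n\in M_n$ and $s\in\mathbb{N}$. Then $D_hH_{s,\mu,P_n}=C(s,\mu,n)\,H_{s-1,\mu,P_n}$, where $C(s,\mu,n)=2s$ if $s$ is even and $C(s,\mu,n)=2(s+\mu+2n-1)$ if $s$ is odd.
   Context: Let $d\ge 2$. $\mathbb{R}_{0,d}$ is the real Clifford algebra generated by $e_1,\dots,e_d$ with $e_ie_j+e_je_i=-2\delta_{ij}$; vectors $x$ are identified with $\sum_ix_ie_i$. $R$ is a root system with reflection group $W$, positive subsystem $R_+$, $\kappa:R\to[0,\infty)$ a $W$-invariant multiplicity function with $\gamma_\kappa=\sum_{\alpha\in R_+}\kappa(\alpha)>0$, $\mu=2\gamma_\kappa+d$. Dunkl operators $T_if(x)=\partial_{x_i}f(x)+\sum_{\alpha\in R_+}\kappa(\alpha)\frac{f(x)-f(\sigma_\alpha x)}{\langle\alpha,x\rangle}\alpha_i$; Dunkl–Dirac operator $D_h=\sum_ie_iT_i$. $M_n$: $\mathbb{C}\otimes\mathbb{R}_{0,d}$-valued homogeneous polynomials of degree $n$ with $D_hP=0$. $D_+f=D_hf-2xf$, and $H_{s,\mu,P_n}=(D_+)^sP_n$. *)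

theory Defs
  imports "HOL-Analysis.Analysis"
begin

text \<open>Dimension d = CARD('n); the generators e_i of the Clifford algebra are indexed by
  the finite linearly ordered type 'n.  An element of the complexified Clifford algebra
  is given by its coefficients on the basis blades e_A (A a subset of 'n, product of the
  e_i, i in A, in increasing order).\<close>

type_synonym 'n cl = "'n set \<Rightarrow> complex"

definition blade_sign :: "('n::{finite,linorder}) set \<Rightarrow> 'n set \<Rightarrow> complex" where
  "blade_sign A B = (-1) ^ (card {(a, b). a \<in> A \<and> b \<in> B \<and> b < a} + card (A \<inter> B))"

definition cl_mult :: "('n::{finite,linorder}) cl \<Rightarrow> 'n cl \<Rightarrow> 'n cl" where
  "cl_mult u v = (\<lambda>C. \<Sum>A\<in>UNIV. \<Sum>B\<in>UNIV.
      if (A - B) \<union> (B - A) = C then blade_sign A B * u A * v B else 0)"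

definition cl_gen :: "'n \<Rightarrow> 'n cl" where
  "cl_gen i = (\<lambda>A. if A = {i} then 1 else 0)"

definition cl_vec :: "(real, 'n::{finite,linorder}) vec \<Rightarrow> 'n cl" where
  "cl_vec x = (\<lambda>A. \<Sum>i\<in>UNIV. if A = {i} then complex_of_real (x $ i) else 0)"

definition homog_poly :: "nat \<Rightarrow> ((real, 'n::{finite,linorder}) vec \<Rightarrow> 'n cl) \<Rightarrow> bool" where
  "homog_poly n f \<longleftrightarrow> (\<exists>c :: ('n \<Rightarrow> nat) \<Rightarrow> 'n cl. \<forall>x.
      f x = (\<lambda>A. \<Sum>\<alpha>\<in>{\<alpha>. (\<Sum>i\<in>UNIV. \<alpha> i) = n}.
                 c \<alpha> A * complex_of_real (\<Prod>i\<in>UNIV. (x $ i) ^ (\<alpha> i))))"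

definition dir_deriv :: "(real, 'n::{finite,linorder}) vec \<Rightarrow> ((real, 'n) vec \<Rightarrow> 'n cl) \<Rightarrow> (real, 'n) vec \<Rightarrow> 'n cl" where
  "dir_deriv v f x = (\<lambda>A. vector_derivative (\<lambda>t::real. f (x + t *\<^sub>R v) A) (at (0::real)))"

definition partial :: "('n::{finite,linorder}) \<Rightarrow> ((real, 'n) vec \<Rightarrow> 'n cl) \<Rightarrow> (real, 'n) vec \<Rightarrow> 'n cl" where
  "partial i f x = dir_deriv (axis i 1) f x"

definition refl :: "(real, 'n::{finite,linorder}) vec \<Rightarrow> (real, 'n) vec \<Rightarrow> (real, 'n) vec" where
  "refl \<alpha> x = x - (2 * (\<alpha> \<bullet> x) / (\<alpha> \<bullet> \<alpha>)) *\<^sub>R \<alpha>"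

definition root_system :: "((real, 'n::{finite,linorder}) vec) set \<Rightarrow> bool" where
  "root_system R \<longleftrightarrow> finite R \<and> 0 \<notin> R \<and>
     (\<forall>\<alpha>\<in>R. \<forall>c::real. c *\<^sub>R \<alpha> \<in> R \<longleftrightarrow> c = 1 \<or> c = -1) \<and>
     (\<forall>\<alpha>\<in>R. \<forall>\<beta>\<in>R. refl \<alpha> \<beta> \<in> R)"

definition positive_subsystem :: "((real, 'n::{finite,linorder}) vec) set \<Rightarrow> ((real, 'n) vec) set \<Rightarrow> bool" where
  "positive_subsystem R Rp \<longleftrightarrow>
     (\<exists>\<beta>. (\<forall>\<alpha>\<in>R. \<alpha> \<bullet> \<beta> \<noteq> 0) \<and> Rp = {\<alpha>\<in>R. \<alpha> \<bullet> \<beta> > 0})"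

inductive_set refl_group :: "((real, 'n::{finite,linorder}) vec) set \<Rightarrow> ((real, 'n) vec \<Rightarrow> (real, 'n) vec) set"
  for R where
    id: "id \<in> refl_group R"
  | step: "w \<in> refl_group R \<Longrightarrow> \<alpha> \<in> R \<Longrightarrow> refl \<alpha> \<circ> w \<in> refl_group R"

definition multiplicity :: "((real, 'n::{finite,linorder}) vec) set \<Rightarrow> ((real, 'n) vec \<Rightarrow> real) \<Rightarrow> bool" where
  "multiplicity R \<kappa> \<longleftrightarrow> (\<forall>\<alpha>\<in>R. \<kappa> \<alpha> \<ge> 0) \<and>
     (\<forall>w\<in>refl_group R. \<forall>\<alpha>\<in>R. \<kappa> (w \<alpha>) = \<kappa> \<alpha>)"

definition gamma_k :: "((real, 'n::{finite,linorder}) vec) set \<Rightarrow> ((real, 'n) vec \<Rightarrow> real) \<Rightarrow> real" where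
  "gamma_k Rp \<kappa> = (\<Sum>\<alpha>\<in>Rp. \<kappa> \<alpha>)"

text \<open>Difference quotient (f(x) - f(sigma_alpha x)) / <alpha,x>, extended continuously
  to the hyperplane <alpha,x> = 0 (where, for C^1 f, the limit is 2/|alpha|^2 d_alpha f(x)).\<close>
definition diff_quot :: "(real, 'n::{finite,linorder}) vec \<Rightarrow> ((real, 'n) vec \<Rightarrow> 'n cl) \<Rightarrow> (real, 'n) vec \<Rightarrow> 'n cl" where
  "diff_quot \<alpha> f x =
     (if \<alpha> \<bullet> x \<noteq> 0 then (\<lambda>A. (f x A - f (refl \<alpha> x) A) / complex_of_real (\<alpha> \<bullet> x))
      else (\<lambda>A. complex_of_real (2 / (\<alpha> \<bullet> \<alpha>)) * dir_deriv \<alpha> f x A))"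

definition dunkl :: "((real, 'n::{finite,linorder}) vec) set \<Rightarrow> ((real, 'n) vec \<Rightarrow> real) \<Rightarrow> 'n
     \<Rightarrow> ((real, 'n) vec \<Rightarrow> 'n cl) \<Rightarrow> (real, 'n) vec \<Rightarrow> 'n cl" where
  "dunkl Rp \<kappa> i f x = (\<lambda>A. partial i f x A +
      (\<Sum>\<alpha>\<in>Rp. complex_of_real (\<kappa> \<alpha> * \<alpha> $ i) * diff_quot \<alpha> f x A))"

definition dunkl_dirac :: "((real, 'n::{finite,linorder}) vec) set \<Rightarrow> ((real, 'n) vec \<Rightarrow> real)
     \<Rightarrow> ((real, 'n) vec \<Rightarrow> 'n cl) \<Rightarrow> (real, 'n) vec \<Rightarrow> 'n cl" where
  "dunkl_dirac Rp \<kappa> f x = (\<lambda>A. \<Sum>i\<in>UNIV. cl_mult (cl_gen i) (dunkl Rp \<kappa> i f x) A)"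

definition D_plus :: "((real, 'n::{finite,linorder}) vec) set \<Rightarrow> ((real, 'n) vec \<Rightarrow> real)
     \<Rightarrow> ((real, 'n) vec \<Rightarrow> 'n cl) \<Rightarrow> (real, 'n) vec \<Rightarrow> 'n cl" where
  "D_plus Rp \<kappa> f x = (\<lambda>A. dunkl_dirac Rp \<kappa> f x A - 2 * cl_mult (cl_vec x) (f x) A)"

definition H_fun :: "((real, 'n::{finite,linorder}) vec) set \<Rightarrow> ((real, 'n) vec \<Rightarrow> real) \<Rightarrow> nat
     \<Rightarrow> ((real, 'n) vec \<Rightarrow> 'n cl) \<Rightarrow> (real, 'n) vec \<Rightarrow> 'n cl" where
  "H_fun Rp \<kappa> s P = (D_plus Rp \<kappa> ^^ s) P"

definition monogenic :: "((real, 'n::{finite,linorder}) vec) set \<Rightarrow> ((real, 'n) vec \<Rightarrow> real) \<Rightarrow> nat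
     \<Rightarrow> ((real, 'n) vec \<Rightarrow> 'n cl) \<Rightarrow> bool" where
  "monogenic Rp \<kappa> n P \<longleftrightarrow> homog_poly n P \<and> (\<forall>x. dunkl_dirac Rp \<kappa> P x = (\<lambda>_. 0))"

end

theory Submission
  imports Defs
begin


definition flip :: "'a \<Rightarrow> 'a set \<Rightarrow> 'a set" where
  "flip i C = (if i \<in> C then C - {i} else insert i C)"

definition sg :: "'n::linorder \<Rightarrow> 'n set \<Rightarrow> complex" where
  "sg i C = (-1) ^ card {c\<in>C. c < i} * (if i \<in> C then 1 else -1)"

definition Lm :: "'n::{finite,linorder} \<Rightarrow> 'n cl \<Rightarrow> 'n cl" where
  "Lm i u = (\<lambda>C. sg i C * u (flip i C))"

lemma symdiff_flip: "(({i} - B) \<union> (B - {i}) = C) \<longleftrightarrow> B = flip i C"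
  unfolding flip_def by auto

lemma blade_sign_single:
  fixes B :: "'n::{finite,linorder} set"
  shows "blade_sign {i} B = (-1) ^ card {b\<in>B. b < i} * (if i \<in> B then -1 else 1)"
proof -
  have "{(a, b). a \<in> {i} \<and> b \<in> B \<and> b < a} = (\<lambda>b. (i, b)) ` {b\<in>B. b < i}" by auto
  then have c1: "card {(a, b). a \<in> {i} \<and> b \<in> B \<and> b < a} = card {b\<in>B. b < i}"
    by (simp add: card_image inj_on_def)
  have c2: "card ({i} \<inter> B) = (if i \<in> B then 1 else 0)" by auto
  show ?thesis unfolding blade_sign_def c1 c2 by (auto simp: power_add)
qed

lemma flip_lt_same: "{b\<in>flip i C. b < i} = {c\<in>C. (c::'a::linorder) < i}"
  unfolding flip_def by auto

lemma flip_in: "(j \<in> flip i C) = (if j = i then i \<notin> C else j \<in> C)"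
  unfolding flip_def by auto

lemma flip_flip[simp]: "flip i (flip i C) = C"
  unfolding flip_def by auto

lemma flip_comm: "flip i (flip j C) = flip j (flip i C)"
  unfolding flip_def by auto

lemma cl_gen_mult: "cl_mult (cl_gen i) u = Lm i u"
proof
  fix C
  have "cl_mult (cl_gen i) u C = (\<Sum>A\<in>UNIV. \<Sum>B\<in>UNIV.
      if A = {i} then (if B = flip i C then blade_sign {i} B * u B else 0) else 0)"
    unfolding cl_mult_def cl_gen_def
    by (intro sum.cong refl) (auto simp: symdiff_flip)
  also have "\<dots> = (\<Sum>A\<in>UNIV. if A = {i} then blade_sign {i} (flip i C) * u (flip i C) else 0)"
    by (intro sum.cong refl) (simp add: sum.delta)
  also have "\<dots> = blade_sign {i} (flip i C) * u (flip i C)"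
    by (simp add: sum.delta)
  also have "\<dots> = Lm i u C"
    unfolding Lm_def sg_def blade_sign_single flip_lt_same
    by (auto simp: flip_in)
  finally show "cl_mult (cl_gen i) u C = Lm i u C" .
qed

lemma card_flip_sign:
  assumes "finite S"
  shows "(-1::complex) ^ card (flip i S) = - ((-1) ^ card S)"
proof (cases "i \<in> S")
  case True
  then have "card S = Suc (card (S - {i}))" using assms
    by (metis card_Suc_Diff1)
  then have "(-1::complex) ^ card S = - ((-1) ^ card (S - {i}))" by simp
  then show ?thesis using True by (simp add: flip_def)
next
  case False
  then show ?thesis using assms by (simp add: flip_def)
qed

lemma sg_flip_other:
  fixes i j :: "'n::{finite,linorder}"
  assumes "j \<noteq> i"
  shows "sg j (flip i C) = (if i < j then -1 else 1) * sg j C"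
proof (cases "i < j")
  case True
  then have "{c\<in>flip i C. c < j} = flip i {c\<in>C. c < j}" unfolding flip_def by auto
  then show ?thesis using True assms unfolding sg_def
    by (simp add: card_flip_sign flip_in)
next
  case False
  then have "{c\<in>flip i C. c < j} = {c\<in>C. c < j}" using assms unfolding flip_def by auto
  then show ?thesis using False assms unfolding sg_def
    by (simp add: flip_in)
qed

lemma sg_flip_same: "sg i C * sg i (flip i C) = -1"
  unfolding sg_def flip_lt_same
  by (auto simp: flip_in power_add[symmetric] mult_2[symmetric] )

lemma Lm_anti:
  "Lm i (Lm j u) C + Lm j (Lm i u) C = (if i = j then -2 * u C else 0)"
proof (cases "i = j")
  case True
  then show ?thesis unfolding Lm_def using sg_flip_same[of i C]
    by (simp add: algebra_simps)
next
  case False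
  then have "i < j \<or> j < i" by auto
  then show ?thesis unfolding Lm_def using False
    by (auto simp: sg_flip_other flip_comm[of i j] algebra_simps)
qed

definition Lv :: "(real, 'n::{finite,linorder}) vec \<Rightarrow> 'n cl \<Rightarrow> 'n cl" where
  "Lv a u = (\<lambda>C. \<Sum>k\<in>UNIV. complex_of_real (a $ k) * Lm k u C)"

lemma cl_mult_sum_left:
  "cl_mult (\<lambda>A. \<Sum>k\<in>K. f k A) u C = (\<Sum>k\<in>K. cl_mult (f k) u C)"
proof -
  have "cl_mult (\<lambda>A. \<Sum>k\<in>K. f k A) u C = (\<Sum>A\<in>UNIV. \<Sum>B\<in>UNIV. \<Sum>k\<in>K.
      if (A - B) \<union> (B - A) = C then blade_sign A B * f k A * u B else 0)"
    unfolding cl_mult_def by (intro sum.cong refl) (simp add: sum_distrib_left sum_distrib_right)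
  also have "\<dots> = (\<Sum>k\<in>K. \<Sum>A\<in>UNIV. \<Sum>B\<in>UNIV.
      if (A - B) \<union> (B - A) = C then blade_sign A B * f k A * u B else 0)"
    by (subst sum.swap, subst (2) sum.swap, rule refl)
  finally show ?thesis unfolding cl_mult_def .
qed

lemma cl_vec_sum: "cl_vec x = (\<lambda>A. \<Sum>k\<in>UNIV. complex_of_real (x $ k) * cl_gen k A)"
  unfolding cl_vec_def cl_gen_def by (auto intro!: sum.cong)

lemma cl_mult_scale_left:
  "cl_mult (\<lambda>A. c * f A) u C = c * cl_mult f u C"
  unfolding cl_mult_def sum_distrib_left
  by (intro sum.cong refl) (simp add: mult.assoc mult.left_commute)

lemma cl_vec_mult: "cl_mult (cl_vec x) u = Lv x u"
proof
  fix C
  show "cl_mult (cl_vec x) u C = Lv x u C"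
    unfolding cl_vec_sum cl_mult_sum_left cl_mult_scale_left Lv_def cl_gen_mult ..
qed

lemma Lm_Lv: "Lm k (Lv b u) C = (\<Sum>l\<in>UNIV. complex_of_real (b $ l) * Lm k (Lm l u) C)"
  unfolding Lm_def Lv_def by (simp add: sum_distrib_left algebra_simps)

lemma Lv_anti:
  "Lv a (Lv b u) C + Lv b (Lv a u) C = - 2 * complex_of_real (a \<bullet> b) * u C"
proof -
  have "Lv a (Lv b u) C + Lv b (Lv a u) C =
     (\<Sum>k\<in>UNIV. \<Sum>l\<in>UNIV. complex_of_real (a $ k) * complex_of_real (b $ l) *
         (Lm k (Lm l u) C + Lm l (Lm k u) C))"
  proof -
    have "Lv a (Lv b u) C = (\<Sum>k\<in>UNIV. \<Sum>l\<in>UNIV. complex_of_real (a $ k) * complex_of_real (b $ l) *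
         Lm k (Lm l u) C)"
      unfolding Lv_def[of a "Lv b u"] Lm_Lv by (simp add: sum_distrib_left mult.assoc)
    moreover have "Lv b (Lv a u) C = (\<Sum>k\<in>UNIV. \<Sum>l\<in>UNIV. complex_of_real (a $ k) * complex_of_real (b $ l) *
         Lm l (Lm k u) C)"
      unfolding Lv_def[of b "Lv a u"] Lm_Lv by (subst sum.swap) (simp add: sum_distrib_left mult.assoc mult.left_commute)
    ultimately show ?thesis by (simp add: sum.distrib[symmetric] distrib_left)
  qed
  also have "\<dots> = (\<Sum>k\<in>UNIV. complex_of_real (a $ k) * complex_of_real (b $ k) * (-2 * u C))"
    unfolding Lm_anti by (simp add: if_distrib cong: if_cong)
  also have "\<dots> = - 2 * complex_of_real (a \<bullet> b) * u C"
    unfolding inner_vec_def by (simp add: sum_distrib_left sum_distrib_right algebra_simps)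
  finally show ?thesis .
qed



definition nice :: "((real, 'n::{finite,linorder}) vec \<Rightarrow> 'n cl) \<Rightarrow> bool" where
  "nice f \<longleftrightarrow> (\<forall>A x. (\<lambda>y. f y A) differentiable (at x))"

definition df :: "(real, 'n::{finite,linorder}) vec \<Rightarrow> ((real, 'n) vec \<Rightarrow> 'n cl) \<Rightarrow> (real, 'n) vec \<Rightarrow> 'n cl" where
  "df v f x = (\<lambda>A. frechet_derivative (\<lambda>y. f y A) (at x) v)"

lemma dir_deriv_has:
  assumes "((\<lambda>y. f y A) has_derivative D) (at x)"
  shows "dir_deriv v f x A = D v"
proof -
  have h: "((\<lambda>t::real. x + t *\<^sub>R v) has_derivative (\<lambda>t. t *\<^sub>R v)) (at 0)"
    by (auto intro!: derivative_eq_intros)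
  have a: "((\<lambda>y. f y A) has_derivative D) (at (x + 0 *\<^sub>R v))" using assms by simp
  have "((\<lambda>t. f (x + t *\<^sub>R v) A) has_derivative (\<lambda>t. D (t *\<^sub>R v))) (at 0)"
    using diff_chain_at[OF h a] by (simp add: o_def)
  moreover have "(\<lambda>t. D (t *\<^sub>R v)) = (\<lambda>t. t *\<^sub>R D v)"
    using linear_scale[OF has_derivative_linear[OF assms]] by auto
  ultimately have "((\<lambda>t. f (x + t *\<^sub>R v) A) has_vector_derivative D v) (at 0)"
    by (simp add: has_vector_derivative_def)
  then show ?thesis unfolding dir_deriv_def by (simp add: vector_derivative_at)
qed

lemma nice_has: "nice f \<Longrightarrow> ((\<lambda>y. f y A) has_derivative (\<lambda>v. df v f x A)) (at x)"
  unfolding nice_def df_def using frechet_derivative_works by blast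

lemma df_has: "((\<lambda>y. f y A) has_derivative D) (at x) \<Longrightarrow> df v f x A = D v"
  unfolding df_def using frechet_derivative_at by metis

lemma dir_deriv_nice: "nice f \<Longrightarrow> dir_deriv v f x = df v f x"
proof
  fix A assume "nice f"
  show "dir_deriv v f x A = df v f x A"
    using dir_deriv_has[of f A "\<lambda>v. df v f x A" x v] nice_has[OF \<open>nice f\<close>, of A x] by simp
qed

lemma nice_sum:
  assumes "finite J" "\<And>j. j \<in> J \<Longrightarrow> nice (F j)"
  shows "nice (\<lambda>y A. \<Sum>j\<in>J. c j * F j y A)"
  using assms unfolding nice_def by (auto intro!: derivative_intros)

lemma df_sum:
  assumes "finite J" "\<And>j. j \<in> J \<Longrightarrow> nice (F j)"
  shows "df v (\<lambda>y A. \<Sum>j\<in>J. c j * F j y A) x A = (\<Sum>j\<in>J. c j * df v (F j) x A)"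
proof -
  have "((\<lambda>y. \<Sum>j\<in>J. c j * F j y A) has_derivative (\<lambda>v. \<Sum>j\<in>J. c j * df v (F j) x A)) (at x)"
    using assms nice_has by (auto intro!: derivative_eq_intros)
  then show ?thesis by (rule df_has)
qed

lemma dq_sum:
  assumes "finite J" "\<And>j. j \<in> J \<Longrightarrow> nice (F j)"
  shows "diff_quot a (\<lambda>y A. \<Sum>j\<in>J. c j * F j y A) x A = (\<Sum>j\<in>J. c j * diff_quot a (F j) x A)"
proof (cases "a \<bullet> x = 0")
  case True
  have "\<And>j. j \<in> J \<Longrightarrow> dir_deriv a (F j) x A = df a (F j) x A" using dir_deriv_nice assms by metis
  then show ?thesis unfolding diff_quot_def
    using True dir_deriv_nice[OF nice_sum[OF assms]]
    by (simp add: df_sum[OF assms] sum_distrib_left mult.left_commute)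
next
  case False
  then show ?thesis unfolding diff_quot_def
    by (simp add: sum_divide_distrib[symmetric] sum_subtractf[symmetric] right_diff_distrib)
qed

lemma partial_nice[simp]: "nice f \<Longrightarrow> partial i f x = df (axis i 1) f x"
  unfolding partial_def by (rule dir_deriv_nice)

lemma dunkl_sum:
  assumes "finite J" "\<And>j. j \<in> J \<Longrightarrow> nice (F j)"
  shows "dunkl Rp \<kappa> i (\<lambda>y A. \<Sum>j\<in>J. c j * F j y A) x A = (\<Sum>j\<in>J. c j * dunkl Rp \<kappa> i (F j) x A)"
proof -
  have "partial i (\<lambda>y A. \<Sum>j\<in>J. c j * F j y A) x A = (\<Sum>j\<in>J. c j * df (axis i 1) (F j) x A)"
    using partial_nice[OF nice_sum[of J F c, OF assms]] df_sum[of J F "axis i 1" c x A, OF assms]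
      partial_nice assms(2) by simp
  also have "\<dots> = (\<Sum>j\<in>J. c j * partial i (F j) x A)"
    by (intro sum.cong refl) (simp add: assms(2))
  finally have p: "partial i (\<lambda>y A. \<Sum>j\<in>J. c j * F j y A) x A = (\<Sum>j\<in>J. c j * partial i (F j) x A)" .
  have q: "\<And>a. diff_quot a (\<lambda>y A. \<Sum>j\<in>J. c j * F j y A) x A = (\<Sum>j\<in>J. c j * diff_quot a (F j) x A)"
    using dq_sum[of J F, OF assms] by blast
  show ?thesis unfolding dunkl_def p q
    by (simp add: sum.distrib sum_distrib_left distrib_left mult.left_commute sum.swap[of _ J])
qed

lemma Lm_sum: "Lm i (\<lambda>B. \<Sum>j\<in>J. c j * w j B) C = (\<Sum>j\<in>J. c j * Lm i (w j) C)"
  unfolding Lm_def by (simp add: sum_distrib_left mult.left_commute)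

lemma dunkl_dirac_alt: "dunkl_dirac Rp \<kappa> f x A = (\<Sum>i\<in>UNIV. Lm i (dunkl Rp \<kappa> i f x) A)"
  unfolding dunkl_dirac_def cl_gen_mult ..

lemma dunkl_dirac_sum:
  assumes "finite J" "\<And>j. j \<in> J \<Longrightarrow> nice (F j)"
  shows "dunkl_dirac Rp \<kappa> (\<lambda>y A. \<Sum>j\<in>J. c j * F j y A) x A = (\<Sum>j\<in>J. c j * dunkl_dirac Rp \<kappa> (F j) x A)"
proof -
  have "\<And>i. dunkl Rp \<kappa> i (\<lambda>y A. \<Sum>j\<in>J. c j * F j y A) x = (\<lambda>B. \<Sum>j\<in>J. c j * dunkl Rp \<kappa> i (F j) x B)"
    using dunkl_sum[of J F, OF assms] by blast
  then show ?thesis unfolding dunkl_dirac_alt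
    by (simp add: Lm_sum sum_distrib_left sum.swap[of _ J])
qed



lemma hd_nth[derivative_intros]: "((\<lambda>y. y $ k) has_derivative (\<lambda>h. h $ k)) F"
  by (rule bounded_linear.has_derivative[OF bounded_linear_vec_nth has_derivative_ident])

definition Xf :: "((real, 'n::{finite,linorder}) vec \<Rightarrow> 'n cl) \<Rightarrow> (real, 'n) vec \<Rightarrow> 'n cl" where
  "Xf g = (\<lambda>y. Lv y (g y))"

lemma Xf_has:
  assumes "nice g"
  shows "((\<lambda>y. Xf g y A) has_derivative (\<lambda>v. Lv v (g x) A + Lv x (df v g x) A)) (at x)"
proof -
  have "((\<lambda>y. \<Sum>k\<in>UNIV. complex_of_real (y $ k) * (sg k A * g y (flip k A))) has_derivative
     (\<lambda>v. \<Sum>k\<in>UNIV. complex_of_real (v $ k) * (sg k A * g x (flip k A)) +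
          complex_of_real (x $ k) * (sg k A * df v g x (flip k A)))) (at x)"
    using nice_has[OF assms] by (auto intro!: derivative_eq_intros simp: algebra_simps)
  then show ?thesis unfolding Xf_def Lv_def Lm_def by (simp add: sum.distrib)
qed

lemma nice_Xf: "nice g \<Longrightarrow> nice (Xf g)"
  unfolding nice_def[of "Xf g"] differentiable_def using Xf_has by blast

lemma df_Xf: "nice g \<Longrightarrow> df v (Xf g) x A = Lv v (g x) A + Lv x (df v g x) A"
  using df_has[of "Xf g" A "\<lambda>v. Lv v (g x) A + Lv x (df v g x) A" x v] Xf_has[of g A x] by simp

lemma Lm_add[simp]: "Lm i (\<lambda>B. u B + w B) C = Lm i u C + Lm i w C"
  unfolding Lm_def by (simp add: algebra_simps)
lemma Lm_diff[simp]: "Lm i (\<lambda>B. u B - w B) C = Lm i u C - Lm i w C"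
  unfolding Lm_def by (simp add: algebra_simps)
lemma Lm_scale[simp]: "Lm i (\<lambda>B. c * u B) C = c * Lm i u C"
  unfolding Lm_def by (simp add: algebra_simps)
lemma Lm_divide[simp]: "Lm i (\<lambda>B. u B / c) C = Lm i u C / c"
  unfolding Lm_def by (simp add: algebra_simps)
lemma Lm_sumr[simp]: "Lm i (\<lambda>B. \<Sum>j\<in>J. f j B) C = (\<Sum>j\<in>J. Lm i (f j) C)"
  unfolding Lm_def by (simp add: sum_distrib_left)
lemma Lm_neg[simp]: "Lm i (\<lambda>B. - u B) C = - Lm i u C"
  unfolding Lm_def by simp
lemma Lm_zero[simp]: "Lm i (\<lambda>B. 0) C = 0"
  unfolding Lm_def by simp

lemma Lv_add[simp]: "Lv a (\<lambda>B. u B + w B) C = Lv a u C + Lv a w C"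
  unfolding Lv_def by (simp add: algebra_simps sum.distrib)
lemma Lv_diff[simp]: "Lv a (\<lambda>B. u B - w B) C = Lv a u C - Lv a w C"
  unfolding Lv_def by (simp add: algebra_simps sum_subtractf)
lemma Lv_scale[simp]: "Lv a (\<lambda>B. c * u B) C = c * Lv a u C"
  unfolding Lv_def by (simp add: algebra_simps sum_distrib_left)
lemma Lv_divide[simp]: "Lv a (\<lambda>B. u B / c) C = Lv a u C / c"
  unfolding Lv_def by (simp add: algebra_simps sum_divide_distrib)
lemma Lv_sumr[simp]: "Lv a (\<lambda>B. \<Sum>j\<in>J. f j B) C = (\<Sum>j\<in>J. Lv a (f j) C)"
  unfolding Lv_def by (simp add: sum_distrib_left sum.swap[of _ J])
lemma Lv_neg[simp]: "Lv a (\<lambda>B. - u B) C = - Lv a u C"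
  unfolding Lv_def by (simp add: sum_negf)
lemma Lv_zero[simp]: "Lv a (\<lambda>B. 0) C = 0"
  unfolding Lv_def by simp

lemma Lv_vadd: "Lv (a + b) w C = Lv a w C + Lv b w C"
  unfolding Lv_def by (simp add: algebra_simps sum.distrib)
lemma Lv_vdiff: "Lv (a - b) w C = Lv a w C - Lv b w C"
  unfolding Lv_def by (simp add: algebra_simps sum_subtractf)
lemma Lv_vscale: "Lv (c *\<^sub>R a) w C = complex_of_real c * Lv a w C"
  unfolding Lv_def by (simp add: algebra_simps sum_distrib_left)
lemma Lv_axis: "Lv (axis i 1) w C = Lm i w C"
proof -
  have "\<And>k. complex_of_real (axis i 1 $ k) * Lm k w C = (if k = i then Lm k w C else 0)"
    by (simp add: axis_def)
  then show ?thesis unfolding Lv_def by simp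
qed

lemma Lm_Lv_anti: "Lm i (Lv x w) C = - Lv x (Lm i w) C - 2 * complex_of_real (x $ i) * w C"
proof -
  have "Lv (axis i 1) (Lv x w) C + Lv x (Lv (axis i 1) w) C = - 2 * complex_of_real (axis i 1 \<bullet> x) * w C"
    by (rule Lv_anti)
  moreover have "Lv (axis i 1) (Lv x w) C = Lm i (Lv x w) C" by (rule Lv_axis)
  moreover have "Lv (axis i 1) w = Lm i w" using Lv_axis by blast
  moreover have "axis i 1 \<bullet> x = x $ i" by (simp add: inner_axis')
  ultimately have "Lm i (Lv x w) C + Lv x (Lm i w) C = - 2 * complex_of_real (x $ i) * w C" by simp
  then have "Lm i (Lv x w) C = - 2 * complex_of_real (x $ i) * w C - Lv x (Lm i w) C"
    by (simp add: eq_diff_eq)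
  then show ?thesis by simp
qed

lemma twice_aux: "(z::complex) + z = c * y \<Longrightarrow> z = (c / 2) * y"
  by (simp add: field_simps)

lemma Lm_Lm_same: "Lm i (Lm i w) C = - w C"
proof -
  have "Lm i (Lm i w) C + Lm i (Lm i w) C = (-2) * w C"
    using Lm_anti[of i i w C] by (simp only: if_True simp_thms)
  from twice_aux[OF this] show ?thesis by simp
qed

lemma Lv_Lv_same: "Lv a (Lv a w) C = - complex_of_real (a \<bullet> a) * w C"
proof -
  have "Lv a (Lv a w) C + Lv a (Lv a w) C = (- 2 * complex_of_real (a \<bullet> a)) * w C"
    using Lv_anti[of a a w C] by (simp only: mult.assoc)
  from twice_aux[OF this] show ?thesis by simp
qed

lemma Lv_as_Lm: "(\<Sum>i\<in>UNIV. complex_of_real (a $ i) * Lm i w C) = Lv a w C"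
  unfolding Lv_def ..

lemma refl_zero: "a \<bullet> x = 0 \<Longrightarrow> refl a x = x"
  unfolding refl_def by simp

lemma dq_mul: "complex_of_real (a \<bullet> x) * diff_quot a g x B = g x B - g (refl a x) B"
  unfolding diff_quot_def by (auto simp: refl_zero)

lemma dq_Xf:
  assumes "nice g" "a \<noteq> 0"
  shows "diff_quot a (Xf g) x A = Lv x (diff_quot a g x) A
           + complex_of_real (2 / (a \<bullet> a)) * Lv a (g (refl a x)) A"
proof (cases "a \<bullet> x = 0")
  case True
  then show ?thesis unfolding diff_quot_def
    using dir_deriv_nice[OF nice_Xf[OF assms(1)]] dir_deriv_nice[OF assms(1)]
    by (simp add: df_Xf[OF assms(1)] refl_zero algebra_simps)
next
  case False
  have aa: "a \<bullet> a \<noteq> 0" using assms(2) by simp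
  have r: "Lv (refl a x) w A = Lv x w A - complex_of_real (2 * (a \<bullet> x) / (a \<bullet> a)) * Lv a w A" for w
    unfolding refl_def Lv_vdiff Lv_vscale ..
  show ?thesis using False aa unfolding diff_quot_def Xf_def
    by (simp add: r field_simps)
qed



lemma dunkl_dirac_expand:
  assumes "finite Rp"
  shows "dunkl_dirac Rp \<kappa> g x A = (\<Sum>i\<in>UNIV. Lm i (partial i g x) A)
     + (\<Sum>a\<in>Rp. complex_of_real (\<kappa> a) * Lv a (diff_quot a g x) A)"
proof -
  have "dunkl_dirac Rp \<kappa> g x A = (\<Sum>i\<in>UNIV. Lm i (partial i g x) A
     + (\<Sum>a\<in>Rp. complex_of_real (\<kappa> a) * (complex_of_real (a $ i) * Lm i (diff_quot a g x) A)))"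
    unfolding dunkl_dirac_alt dunkl_def by (simp add: mult.assoc)
  also have "\<dots> = (\<Sum>i\<in>UNIV. Lm i (partial i g x) A)
     + (\<Sum>a\<in>Rp. complex_of_real (\<kappa> a) * (\<Sum>i\<in>UNIV. complex_of_real (a $ i) * Lm i (diff_quot a g x) A))"
    by (simp add: sum.distrib sum_distrib_left sum.swap[of _ UNIV])
  finally show ?thesis by (simp add: Lv_as_Lm)
qed

lemma dunkl_dirac_Xf:
  fixes g :: "(real, 'n::{finite,linorder}) vec \<Rightarrow> 'n cl"
  assumes g: "nice g" and fin: "finite Rp" and nz: "\<And>a. a \<in> Rp \<Longrightarrow> a \<noteq> 0"
  shows "dunkl_dirac Rp \<kappa> (Xf g) x A =
     - Lv x (dunkl_dirac Rp \<kappa> g x) A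
     - complex_of_real (real CARD('n) + 2 * gamma_k Rp \<kappa>) * g x A
     - 2 * (\<Sum>i\<in>UNIV. complex_of_real (x $ i) * partial i g x A)"
proof -
  define G where "G = g x"
  define P where "P i = partial i g x" for i
  define Q where "Q a = diff_quot a g x" for a
  define S where "S a = g (refl a x)" for a
  have pX: "partial i (Xf g) x = (\<lambda>B. Lm i G B + Lv x (P i) B)" for i
    unfolding G_def P_def partial_nice[OF nice_Xf[OF g]] partial_nice[OF g]
    by (simp add: df_Xf[OF g] Lv_axis fun_eq_iff)
  have qX: "a \<in> Rp \<Longrightarrow> diff_quot a (Xf g) x = (\<lambda>B. Lv x (Q a) B
           + complex_of_real (2 / (a \<bullet> a)) * Lv a (S a) B)" for a
    using dq_Xf[OF g nz] unfolding Q_def S_def by blast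
  have "dunkl_dirac Rp \<kappa> (Xf g) x A = (\<Sum>i\<in>UNIV. Lm i (partial i (Xf g) x) A)
     + (\<Sum>a\<in>Rp. complex_of_real (\<kappa> a) * Lv a (diff_quot a (Xf g) x) A)"
    by (rule dunkl_dirac_expand[OF fin])
  also have "\<dots> = (\<Sum>i\<in>UNIV. Lm i (\<lambda>B. Lm i G B + Lv x (P i) B) A)
     + (\<Sum>a\<in>Rp. complex_of_real (\<kappa> a) * Lv a (\<lambda>B. Lv x (Q a) B
           + complex_of_real (2 / (a \<bullet> a)) * Lv a (S a) B) A)"
    using qX by (simp add: pX)
  also have "\<dots> = (\<Sum>i\<in>UNIV. - G A - Lv x (Lm i (P i)) A - 2 * complex_of_real (x $ i) * P i A)
     + (\<Sum>a\<in>Rp. complex_of_real (\<kappa> a) * (Lv a (Lv x (Q a)) A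
           + complex_of_real (2 / (a \<bullet> a)) * Lv a (Lv a (S a)) A))"
    by (intro arg_cong2[where f="(+)"] sum.cong refl)
       (simp add: Lm_Lm_same Lm_Lv_anti, simp only: Lv_add Lv_scale)
  also have "\<dots> = (\<Sum>i\<in>UNIV. - G A - Lv x (Lm i (P i)) A - 2 * complex_of_real (x $ i) * P i A)
     + (\<Sum>a\<in>Rp. complex_of_real (\<kappa> a) * (- Lv x (Lv a (Q a)) A - 2 * G A))"
  proof -
    have "Lv a (Lv x (Q a)) A + complex_of_real (2 / (a \<bullet> a)) * Lv a (Lv a (S a)) A
        = - Lv x (Lv a (Q a)) A - 2 * G A" if "a \<in> Rp" for a
    proof -
      have aa: "a \<bullet> a \<noteq> 0" using nz[OF that] by simp
      have e1: "Lv a (Lv x (Q a)) A = - 2 * (complex_of_real (a \<bullet> x) * Q a A) - Lv x (Lv a (Q a)) A"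
          using Lv_anti[of a x "Q a" A] by (simp only: eq_diff_eq mult.assoc)
      have e2: "complex_of_real (a \<bullet> x) * Q a A = G A - S a A"
        unfolding Q_def G_def S_def by (rule dq_mul)
      have e3: "complex_of_real (2 / (a \<bullet> a)) * Lv a (Lv a (S a)) A = - 2 * S a A"
        using aa by (simp add: Lv_Lv_same)
      have "Lv a (Lv x (Q a)) A + complex_of_real (2 / (a \<bullet> a)) * Lv a (Lv a (S a)) A
         = (- 2 * (G A - S a A) - Lv x (Lv a (Q a)) A) + (- 2 * S a A)"
        by (simp only: e1 e2 e3)
      also have "\<dots> = - Lv x (Lv a (Q a)) A - 2 * G A" by (simp add: algebra_simps)
      finally show ?thesis .
    qed
    then show ?thesis by (intro arg_cong2[where f="(+)"] refl sum.cong) (simp_all only:)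
  qed
  also have "\<dots> = - Lv x (dunkl_dirac Rp \<kappa> g x) A
     - complex_of_real (real CARD('n) + 2 * gamma_k Rp \<kappa>) * g x A
     - 2 * (\<Sum>i\<in>UNIV. complex_of_real (x $ i) * partial i g x A)"
  proof -
    have "dunkl_dirac Rp \<kappa> g x = (\<lambda>B. (\<Sum>i\<in>UNIV. Lm i (P i) B)
     + (\<Sum>a\<in>Rp. complex_of_real (\<kappa> a) * Lv a (Q a) B))"
      using dunkl_dirac_expand[OF fin] unfolding P_def Q_def by blast
    then have m1: "Lv x (dunkl_dirac Rp \<kappa> g x) A = (\<Sum>i\<in>UNIV. Lv x (Lm i (P i)) A)
     + (\<Sum>a\<in>Rp. complex_of_real (\<kappa> a) * Lv x (Lv a (Q a)) A)" by simp
    have m2: "(\<Sum>i\<in>UNIV. - G A - Lv x (Lm i (P i)) A - 2 * complex_of_real (x $ i) * P i A)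
       = - of_nat CARD('n) * G A - (\<Sum>i\<in>UNIV. Lv x (Lm i (P i)) A)
         - 2 * (\<Sum>i\<in>UNIV. complex_of_real (x $ i) * P i A)"
      by (simp add: sum_subtractf sum_negf sum_distrib_left mult.assoc)
    have m3: "(\<Sum>a\<in>Rp. complex_of_real (\<kappa> a) * (- Lv x (Lv a (Q a)) A - 2 * G A))
       = - (\<Sum>a\<in>Rp. complex_of_real (\<kappa> a) * Lv x (Lv a (Q a)) A)
         - 2 * complex_of_real (gamma_k Rp \<kappa>) * G A"
      unfolding gamma_k_def
      by (simp add: sum_subtractf sum_negf sum_distrib_left sum_distrib_right right_diff_distrib
          mult.assoc mult.left_commute)
    have "(\<Sum>i\<in>UNIV. - G A - Lv x (Lm i (P i)) A - 2 * complex_of_real (x $ i) * P i A)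
     + (\<Sum>a\<in>Rp. complex_of_real (\<kappa> a) * (- Lv x (Lv a (Q a)) A - 2 * G A))
     = (- of_nat CARD('n) * G A - (\<Sum>i\<in>UNIV. Lv x (Lm i (P i)) A)
         - 2 * (\<Sum>i\<in>UNIV. complex_of_real (x $ i) * P i A))
      + (- (\<Sum>a\<in>Rp. complex_of_real (\<kappa> a) * Lv x (Lv a (Q a)) A)
         - 2 * complex_of_real (gamma_k Rp \<kappa>) * G A)"
      by (simp only: m2 m3)
    also have "\<dots> = - ((\<Sum>i\<in>UNIV. Lv x (Lm i (P i)) A)
     + (\<Sum>a\<in>Rp. complex_of_real (\<kappa> a) * Lv x (Lv a (Q a)) A))
     - complex_of_real (real CARD('n) + 2 * gamma_k Rp \<kappa>) * G A
     - 2 * (\<Sum>i\<in>UNIV. complex_of_real (x $ i) * P i A)"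
      by (simp add: algebra_simps)
    finally have fin: "(\<Sum>i\<in>UNIV. - G A - Lv x (Lm i (P i)) A - 2 * complex_of_real (x $ i) * P i A)
     + (\<Sum>a\<in>Rp. complex_of_real (\<kappa> a) * (- Lv x (Lv a (Q a)) A - 2 * G A))
     = - Lv x (dunkl_dirac Rp \<kappa> g x) A
     - complex_of_real (real CARD('n) + 2 * gamma_k Rp \<kappa>) * G A
     - 2 * (\<Sum>i\<in>UNIV. complex_of_real (x $ i) * P i A)" by (simp only: m1)
    show ?thesis using fin unfolding G_def P_def .
  qed
  finally show ?thesis .
qed



definition Sf :: "nat \<Rightarrow> ((real, 'n::{finite,linorder}) vec \<Rightarrow> 'n cl) \<Rightarrow> (real, 'n) vec \<Rightarrow> 'n cl" where
  "Sf m g = (\<lambda>y A. complex_of_real ((y \<bullet> y) ^ m) * g y A)"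

lemma Sf_has:
  assumes "nice g"
  shows "((\<lambda>y. Sf m g y A) has_derivative
     (\<lambda>v. complex_of_real (real m * (x \<bullet> x) ^ (m - 1) * (2 * (x \<bullet> v))) * g x A
        + complex_of_real ((x \<bullet> x) ^ m) * df v g x A)) (at x)"
  unfolding Sf_def using nice_has[OF assms]
  by (auto intro!: derivative_eq_intros simp: inner_commute algebra_simps)

lemma nice_Sf: "nice g \<Longrightarrow> nice (Sf m g)"
  unfolding nice_def[of "Sf m g"] differentiable_def using Sf_has by blast

lemma df_Sf: "nice g \<Longrightarrow> df v (Sf m g) x A =
   complex_of_real (real m * (x \<bullet> x) ^ (m - 1) * (2 * (x \<bullet> v))) * g x A
        + complex_of_real ((x \<bullet> x) ^ m) * df v g x A"
  using df_has[of "Sf m g" A _ x v] Sf_has[of g m A x] by simp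

lemma refl_norm:
  assumes "a \<noteq> 0"
  shows "refl a x \<bullet> refl a x = x \<bullet> x"
proof -
  have aa: "a \<bullet> a \<noteq> 0" using assms by simp
  show ?thesis unfolding refl_def using aa
    by (simp add: inner_diff_left inner_diff_right inner_commute power2_eq_square field_simps)
qed

lemma dq_Sf:
  assumes "nice g" "a \<noteq> 0"
  shows "diff_quot a (Sf m g) x A = complex_of_real ((x \<bullet> x) ^ m) * diff_quot a g x A"
proof (cases "a \<bullet> x = 0")
  case True
  then show ?thesis unfolding diff_quot_def
    using dir_deriv_nice[OF nice_Sf[OF assms(1)]] dir_deriv_nice[OF assms(1)]
    by (simp add: df_Sf[OF assms(1)] inner_commute)
next
  case False
  then show ?thesis unfolding diff_quot_def Sf_def
    by (simp add: refl_norm[OF assms(2)] diff_divide_distrib right_diff_distrib)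
qed

lemma partial_Sf:
  assumes "nice g"
  shows "partial i (Sf m g) x A = complex_of_real (2 * real m * (x \<bullet> x) ^ (m - 1) * x $ i) * g x A
        + complex_of_real ((x \<bullet> x) ^ m) * partial i g x A"
  unfolding partial_nice[OF nice_Sf[OF assms]] partial_nice[OF assms] df_Sf[OF assms]
  by (simp add: inner_axis)

lemma dunkl_dirac_Sf:
  fixes g :: "(real, 'n::{finite,linorder}) vec \<Rightarrow> 'n cl"
  assumes g: "nice g" and fin: "finite Rp" and nz: "\<And>a. a \<in> Rp \<Longrightarrow> a \<noteq> 0"
  shows "dunkl_dirac Rp \<kappa> (Sf m g) x A =
     complex_of_real ((x \<bullet> x) ^ m) * dunkl_dirac Rp \<kappa> g x A
     + complex_of_real (2 * real m * (x \<bullet> x) ^ (m - 1)) * Lv x (g x) A"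
proof -
  have p: "partial i (Sf m g) x = (\<lambda>B. complex_of_real (2 * real m * (x \<bullet> x) ^ (m - 1)) *
      (complex_of_real (x $ i) * g x B) + complex_of_real ((x \<bullet> x) ^ m) * partial i g x B)" for i
    using partial_Sf[OF g] by (simp add: fun_eq_iff mult.assoc)
  have q: "a \<in> Rp \<Longrightarrow> diff_quot a (Sf m g) x = (\<lambda>B. complex_of_real ((x \<bullet> x) ^ m) * diff_quot a g x B)" for a
    using dq_Sf[OF g nz] by blast
  have "dunkl_dirac Rp \<kappa> (Sf m g) x A = (\<Sum>i\<in>UNIV. Lm i (partial i (Sf m g) x) A)
     + (\<Sum>a\<in>Rp. complex_of_real (\<kappa> a) * Lv a (diff_quot a (Sf m g) x) A)"
    by (rule dunkl_dirac_expand[OF fin])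
  also have "\<dots> = (\<Sum>i\<in>UNIV. complex_of_real (2 * real m * (x \<bullet> x) ^ (m - 1)) *
      (complex_of_real (x $ i) * Lm i (g x) A) + complex_of_real ((x \<bullet> x) ^ m) * Lm i (partial i g x) A)
     + (\<Sum>a\<in>Rp. complex_of_real (\<kappa> a) * (complex_of_real ((x \<bullet> x) ^ m) * Lv a (diff_quot a g x) A))"
    unfolding p by (intro arg_cong2[where f="(+)"] sum.cong refl) (simp_all only: q Lm_add Lm_scale Lv_scale)
  also have "\<dots> = complex_of_real ((x \<bullet> x) ^ m) * ((\<Sum>i\<in>UNIV. Lm i (partial i g x) A)
     + (\<Sum>a\<in>Rp. complex_of_real (\<kappa> a) * Lv a (diff_quot a g x) A))
     + complex_of_real (2 * real m * (x \<bullet> x) ^ (m - 1)) * (\<Sum>i\<in>UNIV. complex_of_real (x $ i) * Lm i (g x) A)"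
    by (simp add: sum.distrib sum_distrib_left distrib_left mult.left_commute)
  also have "\<dots> = complex_of_real ((x \<bullet> x) ^ m) * dunkl_dirac Rp \<kappa> g x A
     + complex_of_real (2 * real m * (x \<bullet> x) ^ (m - 1)) * Lv x (g x) A"
    unfolding dunkl_dirac_expand[OF fin] Lv_as_Lm ..
  finally show ?thesis .
qed



lemma homog_nice:
  assumes "homog_poly n P"
  shows "nice P"
proof -
  obtain c where c: "\<And>x. P x = (\<lambda>A. \<Sum>\<alpha>\<in>{\<alpha>. (\<Sum>i\<in>UNIV. \<alpha> i) = n}.
                 c \<alpha> A * complex_of_real (\<Prod>i\<in>UNIV. (x $ i) ^ (\<alpha> i)))"
    using assms unfolding homog_poly_def by blast
  show ?thesis unfolding nice_def
  proof (intro allI)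
    fix A x
    show "(\<lambda>y. P y A) differentiable at x" unfolding c differentiable_def
      apply (rule exI)
      apply (rule has_derivative_sum)
      apply (rule has_derivative_mult_right)
      apply (rule has_derivative_of_real)
      apply (rule has_derivative_prod)
      apply (rule has_derivative_power)
      apply (rule hd_nth)
      done
  qed
qed

lemma homog_scale:
  assumes "homog_poly n P"
  shows "P (t *\<^sub>R x) A = complex_of_real (t ^ n) * P x A"
proof -
  obtain c where c: "\<And>x. P x = (\<lambda>A. \<Sum>\<alpha>\<in>{\<alpha>. (\<Sum>i\<in>UNIV. \<alpha> i) = n}.
                 c \<alpha> A * complex_of_real (\<Prod>i\<in>UNIV. (x $ i) ^ (\<alpha> i)))"
    using assms unfolding homog_poly_def by blast
  have h: "\<And>\<alpha>. (\<Sum>i\<in>UNIV. \<alpha> i) = n \<Longrightarrow> (\<Prod>i\<in>UNIV. (t * x $ i) ^ (\<alpha> i)) = t ^ n * (\<Prod>i\<in>UNIV. (x $ i) ^ (\<alpha> i))"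
    by (simp add: power_mult_distrib prod.distrib power_sum[symmetric])
  show ?thesis unfolding c sum_distrib_left
    by (intro sum.cong refl) (simp del: of_real_prod of_real_power add: h mult.left_commute)
qed

lemma homog_euler:
  assumes "homog_poly n P"
  shows "(\<Sum>i\<in>UNIV. complex_of_real (x $ i) * partial i P x A) = of_nat n * P x A"
proof -
  have np: "nice P" by (rule homog_nice[OF assms])
  define D where "D = frechet_derivative (\<lambda>y. P y A) (at x)"
  have lin: "linear D" unfolding D_def using nice_has[OF np] df_def
    by (metis (no_types, lifting) ext has_derivative_linear)
  have "((\<lambda>t. P (x + t *\<^sub>R x) A) has_vector_derivative of_nat n * P x A) (at 0)"
  proof -
    have e: "(\<lambda>t. P (x + t *\<^sub>R x) A) = (\<lambda>t. complex_of_real ((1 + t) ^ n) * P x A)"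
      using homog_scale[OF assms, of "1 + _" x A] by (simp add: algebra_simps)
    have "((\<lambda>t. complex_of_real ((1 + t) ^ n) * P x A) has_vector_derivative of_nat n * P x A) (at 0)"
      unfolding has_vector_derivative_def
      by (auto intro!: derivative_eq_intros simp: fun_eq_iff scaleR_conv_of_real)
    then show ?thesis unfolding e .
  qed
  then have "dir_deriv x P x A = of_nat n * P x A"
    unfolding dir_deriv_def by (simp add: vector_derivative_at)
  moreover have "dir_deriv x P x A = D x" unfolding dir_deriv_nice[OF np] df_def D_def ..
  moreover have "D x = (\<Sum>i\<in>UNIV. complex_of_real (x $ i) * D (axis i 1))"
  proof -
    have "D x = D (\<Sum>i\<in>UNIV. x $ i *\<^sub>R axis i 1)"
      using basis_expansion[of x] by (simp add: scalar_mult_eq_scaleR)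
    also have "\<dots> = (\<Sum>i\<in>UNIV. x $ i *\<^sub>R D (axis i 1))"
      using lin by (simp add: linear_sum linear_scale)
    finally show ?thesis by (simp add: scaleR_conv_of_real)
  qed
  moreover have "\<And>i. partial i P x A = D (axis i 1)"
    unfolding partial_nice[OF np] df_def D_def ..
  ultimately show ?thesis by simp
qed



definition dd :: "real \<Rightarrow> nat \<Rightarrow> real" where
  "dd \<nu> j = (if even j then real j else - (\<nu> + real j - 1))"
definition ee :: "nat \<Rightarrow> real" where
  "ee j = (if even j then 1 else -1)"
definition CC :: "real \<Rightarrow> nat \<Rightarrow> real" where
  "CC \<nu> s = (if even s then 2 * real s else 2 * (real s - 1 + \<nu>))"

fun uu :: "real \<Rightarrow> nat \<Rightarrow> nat \<Rightarrow> real" where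
  "uu \<nu> 0 j = (if j = 0 then 1 else 0)"
| "uu \<nu> (Suc s) j = dd \<nu> (Suc j) * uu \<nu> s (Suc j) - 2 * (if j = 0 then 0 else ee (j - 1) * uu \<nu> s (j - 1))"

lemma comm_dd: "dd \<nu> (Suc j) * ee j + (if j = 0 then 0 else ee (j - 1) * dd \<nu> j) = - (\<nu> + 2 * real j)"
proof (cases j)
  case 0 then show ?thesis by (simp add: dd_def ee_def)
next
  case (Suc k)
  then show ?thesis by (cases "even k") (auto simp: dd_def ee_def algebra_simps)
qed

lemma CC0[simp]: "CC \<nu> 0 = 0" by (simp add: CC_def)

lemma CC_step: "CC \<nu> (Suc s) = 2 * \<nu> + 4 * real s - CC \<nu> s"
  by (cases "even s") (auto simp: CC_def algebra_simps)

lemma CC_step2: "s \<ge> 1 \<Longrightarrow> CC \<nu> (Suc s) = CC \<nu> (s - 1) + 4"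
  by (cases s) (auto simp: CC_def algebra_simps)

definition KK :: "real \<Rightarrow> nat \<Rightarrow> real" where
  "KK \<nu> s = - (CC \<nu> s * CC \<nu> (s - 1)) / 2"

lemma KK_small: "s < 2 \<Longrightarrow> KK \<nu> s = 0"
  by (cases s) (auto simp: KK_def)

definition PA where "PA \<nu> s \<longleftrightarrow> (\<forall>j. dd \<nu> (Suc j) * uu \<nu> s (Suc j) = CC \<nu> s * uu \<nu> (s - 1) j)"
definition PB where "PB \<nu> s \<longleftrightarrow> (\<forall>j. (real j - real s) * uu \<nu> s j = KK \<nu> s * uu \<nu> (s - 2) j)"

lemma PA0: "PA \<nu> 0" unfolding PA_def by simp
lemma PB0: "PB \<nu> 0" unfolding PB_def by (simp add: KK_def)
lemma PA1: "PA \<nu> 1" unfolding PA_def by (auto simp: dd_def ee_def CC_def)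

lemma PB_step:
  assumes B: "PB \<nu> s" and A: "PA \<nu> s"
  shows "PB \<nu> (Suc s)"
  unfolding PB_def
proof
  fix j
  have B': "\<And>j. (real j - real s) * uu \<nu> s j = KK \<nu> s * uu \<nu> (s - 2) j" using B PB_def by blast
  have A': "\<And>j. dd \<nu> (Suc j) * uu \<nu> s (Suc j) = CC \<nu> s * uu \<nu> (s - 1) j" using A PA_def by blast
  have h1: "(real j - real (Suc s)) * uu \<nu> (Suc s) j =
     dd \<nu> (Suc j) * ((real (Suc j) - real s) * uu \<nu> s (Suc j)) - 2 * (dd \<nu> (Suc j) * uu \<nu> s (Suc j))
     - 2 * (if j = 0 then 0 else ee (j - 1) * ((real (j - 1) - real s) * uu \<nu> s (j - 1)))"
    by (cases j) (auto simp: algebra_simps)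
  also have "\<dots> = KK \<nu> s * (dd \<nu> (Suc j) * uu \<nu> (s - 2) (Suc j)
       - 2 * (if j = 0 then 0 else ee (j - 1) * uu \<nu> (s - 2) (j - 1)))
     - 2 * (CC \<nu> s * uu \<nu> (s - 1) j)"
    unfolding B' A' by (auto simp: algebra_simps)
  also have "\<dots> = KK \<nu> s * uu \<nu> (s - 1) j - 2 * (CC \<nu> s * uu \<nu> (s - 1) j)"
  proof (cases "s < 2")
    case True then show ?thesis by (simp add: KK_small)
  next
    case False
    then obtain t where t: "s = Suc (Suc t)" by (metis add_2_eq_Suc le_add_diff_inverse not_less)
    show ?thesis unfolding t by simp
  qed
  also have "\<dots> = KK \<nu> (Suc s) * uu \<nu> (Suc s - 2) j"
  proof (cases "s = 0")
    case True then show ?thesis by (simp add: KK_def)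
  next
    case False
    then have "CC \<nu> (Suc s) = CC \<nu> (s - 1) + 4" by (intro CC_step2) simp
    then show ?thesis using False by (simp add: KK_def algebra_simps)
  qed
  finally show "(real j - real (Suc s)) * uu \<nu> (Suc s) j = KK \<nu> (Suc s) * uu \<nu> (Suc s - 2) j" .
qed

lemma PA_step:
  assumes s: "s \<ge> 1" and B: "PB \<nu> s" and A: "PA \<nu> s" and A1: "PA \<nu> (s - 1)"
  shows "PA \<nu> (Suc s)"
  unfolding PA_def
proof
  fix j
  have B': "\<And>j. (real j - real s) * uu \<nu> s j = KK \<nu> s * uu \<nu> (s - 2) j" using B PB_def by blast
  have A': "\<And>j. dd \<nu> (Suc j) * uu \<nu> s (Suc j) = CC \<nu> s * uu \<nu> (s - 1) j" using A PA_def by blast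
  have A1': "\<And>j. dd \<nu> (Suc j) * uu \<nu> (s - 1) (Suc j) = CC \<nu> (s - 1) * uu \<nu> (s - 2) j"
    using A1 PA_def by (simp add: diff_diff_add numeral_2_eq_2)
  obtain t where t: "s = Suc t" using s by (cases s) auto
  have us: "uu \<nu> s j = CC \<nu> (s - 1) * uu \<nu> (s - 2) j - 2 * (if j = 0 then 0 else ee (j - 1) * uu \<nu> (s - 1) (j - 1))"
    using A1'[of j] unfolding t by simp
  have D: "(if j = 0 then 0 else ee (j - 1) * (dd \<nu> j * uu \<nu> s j)) =
           (if j = 0 then 0 else ee (j - 1) * (CC \<nu> s * uu \<nu> (s - 1) (j - 1)))"
    using A'[of "j - 1"] by (cases j) auto
  have "dd \<nu> (Suc j) * uu \<nu> (Suc s) (Suc j) =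
     dd \<nu> (Suc j) * (dd \<nu> (Suc (Suc j)) * uu \<nu> s (Suc (Suc j))) - 2 * (dd \<nu> (Suc j) * ee j) * uu \<nu> s j"
    by (simp add: algebra_simps)
  also have "\<dots> = CC \<nu> s * (dd \<nu> (Suc j) * uu \<nu> (s - 1) (Suc j)) - 2 * (dd \<nu> (Suc j) * ee j) * uu \<nu> s j"
    by (simp only: A') (simp add: algebra_simps)
  also have "\<dots> = CC \<nu> s * (CC \<nu> (s - 1) * uu \<nu> (s - 2) j) - 2 * (dd \<nu> (Suc j) * ee j) * uu \<nu> s j"
    unfolding A1' ..
  also have "\<dots> = CC \<nu> s * (CC \<nu> (s - 1) * uu \<nu> (s - 2) j)
     + 2 * (\<nu> + 2 * real j) * uu \<nu> s j + 2 * (if j = 0 then 0 else ee (j - 1) * (dd \<nu> j * uu \<nu> s j))"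
  proof -
    have cd: "dd \<nu> (Suc j) * ee j = -(\<nu> + 2 * real j) - (if j = 0 then 0 else ee (j - 1) * dd \<nu> j)"
      using comm_dd[of \<nu> j] by (smt (verit))
    show ?thesis unfolding cd by (cases "j = 0") (simp_all add: algebra_simps)
  qed
  also have "\<dots> = CC \<nu> s * (CC \<nu> (s - 1) * uu \<nu> (s - 2) j)
     + 2 * (\<nu> + 2 * real j) * uu \<nu> s j + CC \<nu> s * (CC \<nu> (s - 1) * uu \<nu> (s - 2) j - uu \<nu> s j)"
  proof -
    have e1: "2 * (if j = 0 then 0 else ee (j - 1) * (dd \<nu> j * uu \<nu> s j)) =
       CC \<nu> s * (2 * (if j = 0 then 0 else ee (j - 1) * uu \<nu> (s - 1) (j - 1)))"
      unfolding D by (cases "j = 0") (simp_all add: algebra_simps)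
    have e2: "2 * (if j = 0 then 0 else ee (j - 1) * uu \<nu> (s - 1) (j - 1)) =
       CC \<nu> (s - 1) * uu \<nu> (s - 2) j - uu \<nu> s j"
      using us by (smt (verit))
    show ?thesis unfolding e1 e2 by (simp add: algebra_simps)
  qed
  also have "\<dots> = 2 * (CC \<nu> s * CC \<nu> (s - 1) * uu \<nu> (s - 2) j) + (2 * \<nu> + 4 * real j - CC \<nu> s) * uu \<nu> s j"
    by (simp add: algebra_simps)
  also have "\<dots> = (2 * \<nu> + 4 * real s - CC \<nu> s) * uu \<nu> s j"
    using B'[of j] unfolding KK_def by (simp add: algebra_simps)
  also have "\<dots> = CC \<nu> (Suc s) * uu \<nu> (Suc s - 1) j"
    by (simp add: CC_step)
  finally show "dd \<nu> (Suc j) * uu \<nu> (Suc s) (Suc j) = CC \<nu> (Suc s) * uu \<nu> (Suc s - 1) j" .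
qed

lemma PAB: "PA \<nu> s \<and> PB \<nu> s"
proof (induction s rule: less_induct)
  case (less s)
  show ?case
  proof (cases s)
    case 0 then show ?thesis using PA0 PB0 by simp
  next
    case (Suc t)
    have Bt: "PB \<nu> t" and At: "PA \<nu> t" using less Suc by auto
    have "PB \<nu> s" using PB_step[OF Bt At] Suc by simp
    moreover have "PA \<nu> s"
    proof (cases "t = 0")
      case True then show ?thesis using PA1 Suc by simp
    next
      case False
      have "PA \<nu> (t - 1)" using less Suc False by simp
      then show ?thesis using PA_step[of t \<nu>] False Bt At Suc by simp
    qed
    ultimately show ?thesis by simp
  qed
qed

lemma uu_main: "dd \<nu> (Suc j) * uu \<nu> s (Suc j) = CC \<nu> s * uu \<nu> (s - 1) j"
  using PAB[of \<nu> s] unfolding PA_def by blast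

lemma uu_supp: "s < j \<Longrightarrow> uu \<nu> s j = 0"
proof (induction s arbitrary: j)
  case 0 then show ?case by simp
next
  case (Suc s) then show ?case by auto
qed



definition FF :: "((real, 'n::{finite,linorder}) vec \<Rightarrow> 'n cl) \<Rightarrow> nat \<Rightarrow> (real, 'n) vec \<Rightarrow> 'n cl" where
  "FF P j = (if even j then Sf (j div 2) P else Sf (j div 2) (Xf P))"

lemma nice_FF: "nice P \<Longrightarrow> nice (FF P j)"
  unfolding FF_def by (auto intro: nice_Sf nice_Xf)

context
  fixes Rp :: "((real, 'n::{finite,linorder}) vec) set" and \<kappa> :: "(real, 'n) vec \<Rightarrow> real"
    and P :: "(real, 'n) vec \<Rightarrow> 'n cl" and n :: nat
  assumes fin: "finite Rp" and nz: "\<And>a. a \<in> Rp \<Longrightarrow> a \<noteq> 0"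
    and hp: "homog_poly n P" and mono: "\<And>x. dunkl_dirac Rp \<kappa> P x = (\<lambda>_. 0)"
begin

definition "\<nu> = real CARD('n) + 2 * gamma_k Rp \<kappa> + 2 * real n"

lemma niceP: "nice P" by (rule homog_nice[OF hp])

lemma D_XfP: "dunkl_dirac Rp \<kappa> (Xf P) x A = - complex_of_real \<nu> * P x A"
proof -
  have "dunkl_dirac Rp \<kappa> (Xf P) x A = - Lv x (\<lambda>_. 0) A
     - complex_of_real (real CARD('n) + 2 * gamma_k Rp \<kappa>) * P x A - 2 * (of_nat n * P x A)"
    using dunkl_dirac_Xf[OF niceP fin nz, of \<kappa> x A] unfolding mono homog_euler[OF hp] .
  also have "\<dots> = - complex_of_real \<nu> * P x A"
    unfolding \<nu>_def using Lv_zero[of x A] by (simp add: algebra_simps)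
  finally show ?thesis .
qed

lemma Lv_Xf: "Lv x (Xf P x) A = - complex_of_real (x \<bullet> x) * P x A"
  unfolding Xf_def by (rule Lv_Lv_same)

lemma DFF: "dunkl_dirac Rp \<kappa> (FF P j) x A = complex_of_real (dd \<nu> j) * FF P (j - 1) x A"
proof (cases "even j")
  case True
  then obtain m where j: "j = 2 * m" by blast
  have "dunkl_dirac Rp \<kappa> (FF P j) x A = complex_of_real (2 * real m * (x \<bullet> x) ^ (m - 1)) * Lv x (P x) A"
    unfolding FF_def j using dunkl_dirac_Sf[OF niceP fin nz, of \<kappa> m x A] by (simp add: mono)
  also have "\<dots> = complex_of_real (dd \<nu> j) * FF P (j - 1) x A"
  proof (cases m)
    case 0 then show ?thesis by (simp add: j dd_def)
  next
    case (Suc k)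
    have "odd (2 * m - 1)" "(2 * m - 1) div 2 = k" using Suc by auto
    then show ?thesis unfolding FF_def j by (simp add: dd_def Sf_def Xf_def Suc)
  qed
  finally show ?thesis .
next
  case False
  then obtain m where j: "j = 2 * m + 1" using oddE by blast
  have "dunkl_dirac Rp \<kappa> (FF P j) x A = complex_of_real ((x \<bullet> x) ^ m) * (- complex_of_real \<nu> * P x A)
     + complex_of_real (2 * real m * (x \<bullet> x) ^ (m - 1)) * (- complex_of_real (x \<bullet> x) * P x A)"
    unfolding FF_def j using dunkl_dirac_Sf[OF nice_Xf[OF niceP] fin nz, of \<kappa> m x A]
    by (simp add: D_XfP Lv_Xf)
  also have "\<dots> = complex_of_real (dd \<nu> j) * FF P (j - 1) x A"
  proof (cases m)
    case 0 then show ?thesis by (simp add: j dd_def FF_def Sf_def)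
  next
    case (Suc k)
    show ?thesis unfolding FF_def j
      by (simp add: Suc dd_def Sf_def algebra_simps)
  qed
  finally show ?thesis .
qed

lemma XFF: "Lv x (FF P j x) A = complex_of_real (ee j) * FF P (Suc j) x A"
proof (cases "even j")
  case True
  then obtain m where j: "j = 2 * m" by blast
  show ?thesis unfolding FF_def j by (simp add: Sf_def Xf_def ee_def)
next
  case False
  then obtain m where j: "j = 2 * m + 1" using oddE by blast
  have "Lv x (FF P j x) A = complex_of_real ((x \<bullet> x) ^ m) * Lv x (Xf P x) A"
    unfolding FF_def j Sf_def by simp
  also have "\<dots> = complex_of_real (ee j) * FF P (Suc j) x A"
    unfolding Lv_Xf unfolding FF_def j Sf_def ee_def by (simp add: algebra_simps)
  finally show ?thesis .
qed

lemma H_fun_Suc: "H_fun Rp \<kappa> (Suc s) P = D_plus Rp \<kappa> (H_fun Rp \<kappa> s P)"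
  unfolding H_fun_def by simp

lemma H_repr: "s < M \<Longrightarrow> H_fun Rp \<kappa> s P = (\<lambda>y A. \<Sum>j<M. complex_of_real (uu \<nu> s j) * FF P j y A)"
proof (induction s arbitrary: M)
  case 0
  then obtain M1 where M: "M = Suc M1" by (cases M) auto
  show ?case
  proof (intro ext)
    fix y A
    have "(\<Sum>j<M. complex_of_real (uu \<nu> 0 j) * FF P j y A) = FF P 0 y A"
      unfolding M sum.lessThan_Suc_shift by simp
    also have "\<dots> = P y A" by (simp add: FF_def Sf_def)
    finally show "H_fun Rp \<kappa> 0 P y A = (\<Sum>j<M. complex_of_real (uu \<nu> 0 j) * FF P j y A)"
      by (simp add: H_fun_def)
  qed
next
  case (Suc s)
  then obtain M1 where M: "M = Suc M1" and M1: "s < M1" by (cases M) auto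
  have nF: "\<And>j. j \<in> {..<Suc M} \<Longrightarrow> nice (FF P j)" using nice_FF[OF niceP] by blast
  show ?case
  proof (intro ext)
    fix y A
    have "dunkl_dirac Rp \<kappa> (H_fun Rp \<kappa> s P) y A =
       (\<Sum>j<Suc M. complex_of_real (uu \<nu> s j) * dunkl_dirac Rp \<kappa> (FF P j) y A)"
    proof -
      have eqH: "H_fun Rp \<kappa> s P = (\<lambda>y A. \<Sum>j<Suc M. complex_of_real (uu \<nu> s j) * FF P j y A)"
        using Suc.prems by (intro Suc.IH) simp
      show ?thesis unfolding eqH by (intro dunkl_dirac_sum) (auto intro: nice_FF[OF niceP])
    qed
    also have "\<dots> = (\<Sum>j<Suc M. complex_of_real (uu \<nu> s j * dd \<nu> j) * FF P (j - 1) y A)"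
      by (simp add: DFF mult.assoc)
    also have "\<dots> = (\<Sum>i<M. complex_of_real (dd \<nu> (Suc i) * uu \<nu> s (Suc i)) * FF P i y A)"
      unfolding sum.lessThan_Suc_shift by (simp add: dd_def mult.commute)
    finally have d1: "dunkl_dirac Rp \<kappa> (H_fun Rp \<kappa> s P) y A =
      (\<Sum>i<M. complex_of_real (dd \<nu> (Suc i) * uu \<nu> s (Suc i)) * FF P i y A)" .
    have "cl_mult (cl_vec y) (H_fun Rp \<kappa> s P y) A = Lv y (\<lambda>A. \<Sum>j<M1. complex_of_real (uu \<nu> s j) * FF P j y A) A"
      unfolding cl_vec_mult Suc.IH[OF M1] by simp
    also have "\<dots> = (\<Sum>j<M1. complex_of_real (uu \<nu> s j * ee j) * FF P (Suc j) y A)"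
      by (simp add: XFF mult.assoc)
    also have "\<dots> = (\<Sum>i<M. complex_of_real (if i = 0 then 0 else ee (i - 1) * uu \<nu> s (i - 1)) * FF P i y A)"
      unfolding M sum.lessThan_Suc_shift by (simp add: mult.commute)
    finally have x1: "cl_mult (cl_vec y) (H_fun Rp \<kappa> s P y) A =
      (\<Sum>i<M. complex_of_real (if i = 0 then 0 else ee (i - 1) * uu \<nu> s (i - 1)) * FF P i y A)" .
    show "H_fun Rp \<kappa> (Suc s) P y A = (\<Sum>j<M. complex_of_real (uu \<nu> (Suc s) j) * FF P j y A)"
      unfolding H_fun_Suc D_plus_def d1 x1
      by (simp add: sum_subtractf sum_distrib_left algebra_simps)
  qed
qed

lemma main_seq:
  assumes "1 \<le> s"
  shows "dunkl_dirac Rp \<kappa> (H_fun Rp \<kappa> s P) x A = complex_of_real (CC \<nu> s) * H_fun Rp \<kappa> (s - 1) P x A"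
proof -
  have "dunkl_dirac Rp \<kappa> (H_fun Rp \<kappa> s P) x A =
       (\<Sum>j<Suc (Suc s). complex_of_real (uu \<nu> s j) * dunkl_dirac Rp \<kappa> (FF P j) x A)"
  proof -
    have eqH: "H_fun Rp \<kappa> s P = (\<lambda>y A. \<Sum>j<Suc (Suc s). complex_of_real (uu \<nu> s j) * FF P j y A)"
      by (intro H_repr) simp
    show ?thesis unfolding eqH by (intro dunkl_dirac_sum) (auto intro: nice_FF[OF niceP])
  qed
  also have "\<dots> = (\<Sum>j<Suc (Suc s). complex_of_real (uu \<nu> s j * dd \<nu> j) * FF P (j - 1) x A)"
    by (simp add: DFF mult.assoc)
  also have "\<dots> = (\<Sum>i<Suc s. complex_of_real (dd \<nu> (Suc i) * uu \<nu> s (Suc i)) * FF P i x A)"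
    unfolding sum.lessThan_Suc_shift[of _ "Suc s"] by (simp add: dd_def mult.commute)
  also have "\<dots> = (\<Sum>i<Suc s. complex_of_real (CC \<nu> s) * (complex_of_real (uu \<nu> (s - 1) i) * FF P i x A))"
    unfolding uu_main by (simp add: mult.assoc)
  also have "\<dots> = complex_of_real (CC \<nu> s) * H_fun Rp \<kappa> (s - 1) P x A"
  proof -
    have eqH: "H_fun Rp \<kappa> (s - 1) P = (\<lambda>y A. \<Sum>j<Suc s. complex_of_real (uu \<nu> (s - 1) j) * FF P j y A)"
      using assms by (intro H_repr) simp
    show ?thesis unfolding eqH by (simp only: sum_distrib_left)
  qed
  finally show ?thesis .
qed

end


theorem mainTheorem7:
  fixes R Rp :: "((real, 'n::{finite,linorder}) vec) set"
    and \<kappa> :: "(real, 'n) vec \<Rightarrow> real"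
    and P :: "(real, 'n) vec \<Rightarrow> 'n cl"
    and n s :: nat
  assumes "CARD('n) \<ge> 2"
    and "root_system R"
    and "positive_subsystem R Rp"
    and "multiplicity R \<kappa>"
    and "gamma_k Rp \<kappa> > 0"
    and "monogenic Rp \<kappa> n P"
    and "s \<ge> 1"
  shows "\<forall>x. dunkl_dirac Rp \<kappa> (H_fun Rp \<kappa> s P) x =
           (\<lambda>A. complex_of_real
                   (if even s then 2 * real s
                    else 2 * (real s + (2 * gamma_k Rp \<kappa> + real CARD('n)) + 2 * real n - 1))
                 * H_fun Rp \<kappa> (s - 1) P x A)"
proof
  fix x
  have fin: "finite Rp"
  proof (rule ccontr)
    assume "infinite Rp"
    then have "gamma_k Rp \<kappa> = 0" by (simp add: gamma_k_def)
    then show False using assms(5) by simp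
  qed
  obtain \<beta> where \<beta>: "Rp = {\<alpha>\<in>R. \<alpha> \<bullet> \<beta> > 0}"
    using assms(3) unfolding positive_subsystem_def by blast
  have nz: "\<And>a. a \<in> Rp \<Longrightarrow> a \<noteq> 0" using \<beta> by auto
  have hp: "homog_poly n P" and mono: "\<And>x. dunkl_dirac Rp \<kappa> P x = (\<lambda>_. 0)"
    using assms(6) unfolding monogenic_def by auto
  have cc: "CC (\<nu> Rp \<kappa> n) s = (if even s then 2 * real s
                    else 2 * (real s + (2 * gamma_k Rp \<kappa> + real CARD('n)) + 2 * real n - 1))"
    by (simp add: CC_def \<nu>_def[OF fin nz hp mono] algebra_simps)
  show "dunkl_dirac Rp \<kappa> (H_fun Rp \<kappa> s P) x =
           (\<lambda>A. complex_of_real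
                   (if even s then 2 * real s
                    else 2 * (real s + (2 * gamma_k Rp \<kappa> + real CARD('n)) + 2 * real n - 1))
                 * H_fun Rp \<kappa> (s - 1) P x A)"
    using main_seq[OF fin nz hp mono assms(7)] unfolding cc[symmetric] by blast
qed


end
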